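(* Let $c\ge0$, $d>0$ and $p_{(\alpha,\beta)}(\omega):=(\alpha-\omega^2)(c-id\omega-\omega^2)-\beta\omega^2$ for real $\alpha,\beta$. Then: (i) For fixed $\alpha\in\mathbb{R}\setminus\{0\}$, $p_{(\alpha,\beta)}$ has a multiple root for at most $4$ values $\beta\in\mathbb{R}$. (ii) For fixed $\beta\in\mathbb{R}\setminus\{0\}$, $p_{(\alpha,\beta)}$ has a multiple root for at most $5$ values $\alpha\in\mathbb{R}$. (iii) $p_{(0,\beta)}$ has a double root at $0$ and the roots $\pm\sqrt{\beta+c-d^2/4}-id/2$. (iv) $p_{(\alpha,0)}$ has the roots $\pm\sqrt{\alpha}$ and $\pm\sqrt{c-d^2/4}-id/2$.
   Context: $\sqrt{\cdot}$ denotes the principal square root. *)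

theory Defs
  imports "HOL-Analysis.Analysis" "HOL-Computational_Algebra.Polynomial"
begin

definition pab :: "real \<Rightarrow> real \<Rightarrow> real \<Rightarrow> real \<Rightarrow> complex poly" where
  "pab c d \<alpha> \<beta> =
     [:complex_of_real \<alpha>, 0, -1:] * [:complex_of_real c, - \<i> * complex_of_real d, -1:]
     - smult (complex_of_real \<beta>) [:0, 0, 1:]"

definition has_multiple_root :: "complex poly \<Rightarrow> bool" where
  "has_multiple_root p \<longleftrightarrow> (\<exists>z. 2 \<le> order z p)"

end

theory Submission imports Defs begin

lemma pab_eq: "pab c d a b = [:complex_of_real (a*c), -\<i>*complex_of_real (a*d),
   -complex_of_real (a+c+b), \<i>*complex_of_real d, 1:]"
  by (subst poly_eq_poly_eq_iff[symmetric]) (auto simp: pab_def algebra_simps power2_eq_square)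

lemma pab_nz: "pab c d a b \<noteq> 0"
  unfolding pab_eq by simp

lemma poly_pab: "poly (pab c d a b) w = (of_real a - w^2) * (of_real c - \<i> * of_real d * w - w^2) - of_real b * w^2"
  by (simp add: pab_def algebra_simps power2_eq_square)

lemma poly_pab': "poly (pderiv (pab c d a b)) w = -\<i>* of_real (a*d) - 2* of_real (a+c+b)*w + 3*\<i>* of_real d * w^2 + 4 * w^3"
  unfolding pab_eq by (simp add: pderiv_pCons algebra_simps power2_eq_square power3_eq_cube)

lemma mult_root:
  assumes "has_multiple_root (pab c d a b)"
  obtains z where "poly (pab c d a b) z = 0" "poly (pderiv (pab c d a b)) z = 0"
proof -
  obtain z where z: "2 \<le> order z (pab c d a b)" using assms unfolding has_multiple_root_def by blast
  have p0: "poly (pab c d a b) z = 0" using z pab_nz order_root by (metis not_numeral_le_zero)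
  have "poly (pderiv (pab c d a b)) z = 0"
  proof (cases "pderiv (pab c d a b) = 0")
    case False
    have "order z (pab c d a b) = Suc (order z (pderiv (pab c d a b)))"
      using order_pderiv[OF pab_nz p0] .
    with z have "order z (pderiv (pab c d a b)) \<noteq> 0" by simp
    then show ?thesis using order_root by blast
  qed simp
  then show ?thesis using p0 that by blast
qed


lemma card_real_bound:
  fixes S :: "real set" and F :: "complex \<Rightarrow> complex" and q :: "complex poly"
  assumes "q \<noteq> 0" "\<forall>x\<in>S. \<exists>z. poly q z = 0 \<and> complex_of_real x = F z"
  shows "finite S \<and> card S \<le> degree q"
proof -
  let ?R = "{z. poly q z = 0}"
  have fin: "finite ?R" using poly_roots_finite[OF assms(1)] .
  have sub: "complex_of_real ` S \<subseteq> F ` ?R" proof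
    fix y assume "y \<in> complex_of_real ` S"
    then obtain x where x: "x \<in> S" "y = complex_of_real x" by blast
    then obtain z where "poly q z = 0" "complex_of_real x = F z" using assms(2) by blast
    then show "y \<in> F ` ?R" using x by blast
  qed
  have inj: "inj_on complex_of_real S" by (auto simp: inj_on_def)
  have f1: "finite (complex_of_real ` S)" using finite_subset[OF sub finite_imageI[OF fin]] .
  have "finite S" using finite_imageD[OF f1 inj] .
  moreover have "card S \<le> degree q"
  proof -
  have "card S = card (complex_of_real ` S)" using card_image[OF inj] by simp
  also have "\<dots> \<le> card (F ` ?R)" using card_mono[OF finite_imageI[OF fin] sub] .
  also have "\<dots> \<le> card ?R" using card_image_le[OF fin] .
  also have "\<dots> \<le> degree q" using card_poly_roots_bound[OF assms(1)] .
  finally show ?thesis .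
  qed
  ultimately show ?thesis by blast
qed

lemma id1: "poly [:-2*complex_of_real (a*c), \<i>*complex_of_real (a*d), 0, \<i>*complex_of_real d, 2:] z =
  z * poly (pderiv (pab c d a b)) z - 2 * poly (pab c d a b) z"
  unfolding poly_pab poly_pab' by (simp add: algebra_simps power2_eq_square power3_eq_cube)

lemma id2: "poly [:0, complex_of_real (2*c^2+2*b*c), -\<i>*complex_of_real (4*c*d+b*d),
     -complex_of_real (2*d^2+4*c), 4*\<i>*complex_of_real d, 2:] z =
 (-\<i> * complex_of_real d - 2*z) * poly (pab c d a b) z
 - (complex_of_real c - \<i> * complex_of_real d * z - z^2) * poly (pderiv (pab c d a b)) z"
  unfolding poly_pab poly_pab' by (simp add: algebra_simps power2_eq_square power3_eq_cube)

lemma solve1: assumes p: "(complex_of_real a - z^2) * (of_real c - \<i> * of_real d * z - z^2) - of_real b * z^2 = 0" and z: "z \<noteq> 0"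
  shows "complex_of_real b = (complex_of_real a - z^2) * (of_real c - \<i> * of_real d * z - z^2) / z^2"
proof -
  have "of_real b * z^2 = (complex_of_real a - z^2) * (of_real c - \<i> * of_real d * z - z^2)"
    using p by (simp add: right_minus_eq)
  then show ?thesis using z by (simp add: eq_divide_eq)
qed

lemma solve2: assumes p: "(complex_of_real a - z^2) * g = complex_of_real b * z^2" and g: "g \<noteq> 0"
  shows "complex_of_real a = z^2 + complex_of_real b * z^2 / g"
proof -
  have "complex_of_real a - z^2 = complex_of_real b * z^2 / g"
    using p g by (simp add: eq_divide_eq)
  then show ?thesis by (simp add: algebra_simps)
qed

lemma part1:
  assumes "d > 0" "a \<noteq> 0"
  shows "finite {b::real. has_multiple_root (pab c d a b)} \<and>
        card {b::real. has_multiple_root (pab c d a b)} \<le> 4"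
proof -
  define q where "q = [:-2*complex_of_real (a*c), \<i>*complex_of_real (a*d), 0, \<i>*complex_of_real d, 2:]"
  have qnz: "q \<noteq> 0" and dq: "degree q = 4" unfolding q_def by simp_all
  define F where "F = (\<lambda>z::complex. (of_real a - z^2) * (of_real c - \<i> * of_real d * z - z^2) / z^2)"
  have H: "\<forall>b\<in>{b::real. has_multiple_root (pab c d a b)}. \<exists>z. poly q z = 0 \<and> complex_of_real b = F z"
  proof
    fix b assume "b \<in> {b::real. has_multiple_root (pab c d a b)}"
    then obtain z where p: "poly (pab c d a b) z = 0" and p': "poly (pderiv (pab c d a b)) z = 0"
      using mult_root by blast
    have "z \<noteq> 0"
    proof
      assume "z = 0"
      with p' have "\<i> * complex_of_real (a*d) = 0" unfolding poly_pab' by simp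
      with assms show False by simp
    qed
    have "poly q z = z * poly (pderiv (pab c d a b)) z - 2 * poly (pab c d a b) z"
      unfolding q_def by (rule id1)
    hence "poly q z = 0" using p p' by simp
    moreover have "complex_of_real b = F z"
      using solve1[OF p[unfolded poly_pab] \<open>z \<noteq> 0\<close>] unfolding F_def by simp
    ultimately show "\<exists>z. poly q z = 0 \<and> complex_of_real b = F z" by blast
  qed
  from card_real_bound[OF qnz H] dq show ?thesis by simp
qed

lemma part2:
  assumes "d > 0" "b \<noteq> 0"
  shows "finite {a::real. has_multiple_root (pab c d a b)} \<and>
        card {a::real. has_multiple_root (pab c d a b)} \<le> 5"
proof -
  define q where "q = [:0, complex_of_real (2*c^2+2*b*c), -\<i>*complex_of_real (4*c*d+b*d),
     -complex_of_real (2*d^2+4*c), 4*\<i>*complex_of_real d, 2:]"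
  have qnz: "q \<noteq> 0" and dq: "degree q = 5" unfolding q_def by simp_all
  define g where "g = (\<lambda>z::complex. complex_of_real c - \<i> * complex_of_real d * z - z^2)"
  define F where "F = (\<lambda>z::complex. if g z = 0 then 0 else z^2 + complex_of_real b * z^2 / g z)"
  have H: "\<forall>a\<in>{a::real. has_multiple_root (pab c d a b)}. \<exists>z. poly q z = 0 \<and> complex_of_real a = F z"
  proof
    fix a assume "a \<in> {a::real. has_multiple_root (pab c d a b)}"
    then obtain z where p: "poly (pab c d a b) z = 0" and p': "poly (pderiv (pab c d a b)) z = 0"
      using mult_root by blast
    have "poly q z = (-\<i> * complex_of_real d - 2*z) * poly (pab c d a b) z - g z * poly (pderiv (pab c d a b)) z"
      unfolding q_def g_def by (rule id2)
    hence "poly q z = 0" using p p' by simp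
    moreover have "complex_of_real a = F z"
    proof (cases "g z = 0")
      case True
      with p have "complex_of_real b * z^2 = 0" unfolding poly_pab g_def by simp
      with assms have z0: "z = 0" by simp
      with p' have "\<i> * complex_of_real (a*d) = 0" unfolding poly_pab' by simp
      with assms have "a = 0" by simp
      then show ?thesis using True F_def by simp
    next
      case False
      from p have "(complex_of_real a - z^2) * g z = complex_of_real b * z^2" unfolding poly_pab g_def by simp
      then show ?thesis using solve2 False unfolding F_def by simp
    qed
    ultimately show "\<exists>z. poly q z = 0 \<and> complex_of_real a = F z" by blast
  qed
  from card_real_bound[OF qnz H] dq show ?thesis by simp
qed

lemma part3:
  "2 \<le> order 0 (pab c d 0 b) \<and>
        {z. poly (pab c d 0 b) z = 0} =
          {0, csqrt (complex_of_real (b + c - d^2/4)) - \<i> * complex_of_real (d/2),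
              - csqrt (complex_of_real (b + c - d^2/4)) - \<i> * complex_of_real (d/2)}"
proof
  have e: "pab c d 0 b = [:-0,1:]^2 * [:-complex_of_real (c+b), \<i> * complex_of_real d, 1:]"
    by (subst poly_eq_poly_eq_iff[symmetric]) (auto simp: pab_def algebra_simps power2_eq_square)
  have nz: "pab c d 0 b \<noteq> 0" by (rule pab_nz)
  have "[:-0,1:]^2 dvd pab c d 0 b" by (subst e, rule dvd_triv_left)
  then show "2 \<le> order 0 (pab c d 0 b)" using order_divides nz by blast
next
  define s where "s = csqrt (complex_of_real (b + c - d^2/4))"
  have s2: "s^2 = complex_of_real (b + c - d^2/4)" unfolding s_def by simp
  have "poly (pab c d 0 b) w = w^2 * ((w - (s - \<i> * complex_of_real (d/2))) * (w - (- s - \<i> * complex_of_real (d/2))))" for w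
    unfolding poly_pab by (simp add: algebra_simps power2_eq_square s2[unfolded power2_eq_square])
  then show "{z. poly (pab c d 0 b) z = 0} = {0, csqrt (complex_of_real (b + c - d^2/4)) - \<i> * complex_of_real (d/2),
              - csqrt (complex_of_real (b + c - d^2/4)) - \<i> * complex_of_real (d/2)}"
    unfolding s_def by auto
qed

lemma part4:
  "{z. poly (pab c d a 0) z = 0} =
          {csqrt (complex_of_real a), - csqrt (complex_of_real a),
           csqrt (complex_of_real (c - d^2/4)) - \<i> * complex_of_real (d/2),
           - csqrt (complex_of_real (c - d^2/4)) - \<i> * complex_of_real (d/2)}"
proof -
  define s where "s = csqrt (complex_of_real (c - d^2/4))"
  have s2: "s^2 = complex_of_real (c - d^2/4)" unfolding s_def by simp
  define t where "t = csqrt (complex_of_real a)"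
  have t2: "t^2 = complex_of_real a" unfolding t_def by simp
  have "poly (pab c d a 0) w = ((w - t) * (w + t)) * ((w - (s - \<i> * complex_of_real (d/2))) * (w - (- s - \<i> * complex_of_real (d/2))))" for w
    unfolding poly_pab by (simp add: algebra_simps power2_eq_square s2[unfolded power2_eq_square] t2[unfolded power2_eq_square])
  then show ?thesis unfolding s_def t_def by (auto simp: add_eq_0_iff)
qed

theorem lemma2p15:
  fixes c d :: real
  assumes "c \<ge> 0" and "d > 0"
  shows
    "(\<forall>\<alpha>::real. \<alpha> \<noteq> 0 \<longrightarrow>
        finite {\<beta>::real. has_multiple_root (pab c d \<alpha> \<beta>)} \<and>
        card {\<beta>::real. has_multiple_root (pab c d \<alpha> \<beta>)} \<le> 4)
   \<and> (\<forall>\<beta>::real. \<beta> \<noteq> 0 \<longrightarrow>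
        finite {\<alpha>::real. has_multiple_root (pab c d \<alpha> \<beta>)} \<and>
        card {\<alpha>::real. has_multiple_root (pab c d \<alpha> \<beta>)} \<le> 5)
   \<and> (\<forall>\<beta>::real.
        2 \<le> order 0 (pab c d 0 \<beta>) \<and>
        {z. poly (pab c d 0 \<beta>) z = 0} =
          {0, csqrt (complex_of_real (\<beta> + c - d^2/4)) - \<i> * complex_of_real (d/2),
              - csqrt (complex_of_real (\<beta> + c - d^2/4)) - \<i> * complex_of_real (d/2)})
   \<and> (\<forall>\<alpha>::real.
        {z. poly (pab c d \<alpha> 0) z = 0} =
          {csqrt (complex_of_real \<alpha>), - csqrt (complex_of_real \<alpha>),
           csqrt (complex_of_real (c - d^2/4)) - \<i> * complex_of_real (d/2),
           - csqrt (complex_of_real (c - d^2/4)) - \<i> * complex_of_real (d/2)})"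
    using part1[OF assms(2)] part2[OF assms(2)] part3 part4 by blast

end
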